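(* Let $(X,<)$ be a linearly ordered set. (1) For all $u,v\in\beta X$: $$u\trianglelefteq v\iff \widetilde{\min}(u,v)=u\vee\widetilde{\min}(v,u)=u\iff\widetilde{\min}(u,v)=u\vee\widetilde{\min}(u,v)\ne\widetilde{\min}(v,u)$$ $$\iff\widetilde{\max}(u,v)=v\vee\widetilde{\max}(v,u)=v\iff\widetilde{\max}(u,v)=v\vee\widetilde{\max}(u,v)\ne\widetilde{\max}(v,u),$$ and $$u\equiv v\iff\widetilde{\min}(u,v)\ne\widetilde{\min}(v,u)\vee u=v\iff\widetilde{\max}(u,v)\ne\widetilde{\max}(v,u)\vee u=v.$$ (2) The equivalence $\equiv$ is a congruence of the skew lattice $(\beta X,\widetilde{\max},\widetilde{\min})$ and coincides with the relation $D$. (3) The quotient $\beta X/\!\equiv$ with the operations induced by $\widetilde{\min}$ and $\widetilde{\max}$ is isomorphic, via $[u]\mapsto\mathrm{supp}(u)$, to the lattice $(s(X),\min,\max)$. (4) For each $u\in\beta X$, the $\equiv$-class of $u$ is $\{u\}$ if $u$ is principal; if $u$ is non-principal with $I_u\in u$, it is a left-zero band for $\widetilde{\min}$ and a right-zero band for $\widetilde{\max}$; if $u$ is non-principal with $J_u\in u$, it is a right-zero band for $\widetilde{\min}$ and a left-zero band for $\widetilde{\max}$.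
   Context: $\beta X$ is the set of ultrafilters over $X$. For a binary relation $R$ on $X$, $u\,\tilde R\,v\iff\{x:\{y:x\,R\,y\}\in v\}\in u$; for a binary operation $F$ (here $\min,\max$), $S\in\tilde F(u,v)\iff\{x:\{y:F(x,y)\in S\}\in v\}\in u$. Define $u\trianglelefteq v\iff(u\,\tilde\le\,v\vee v\,\tilde\ge\,u)$ and $u\equiv v\iff(u\trianglelefteq v\wedge v\trianglelefteq u)$. $D$ is the relation on $\beta X$ given by $u\,D\,v\iff\widetilde{\min}(\widetilde{\min}(u,v),u)=u\wedge\widetilde{\min}(\widetilde{\min}(v,u),v)=v$. A set $B$ with binary operation $\cdot$ is a left-zero band if $xy=x$ for all $x,y\in B$, a right-zero band if $xy=y$ for all $x,y\in B$. $I_u=\bigcap\{I\in u:I\text{ initial segment}\}$, $J_u=\bigcap\{J\in u:J\text{ final segment}\}$. Supports: $\mathrm{supp}(\tilde x)=\{x\}$; for non-principal $u$ (exactly one of $I_u\in u$, $J_u\in u$ holds), $\mathrm{supp}(u)$ is $I_u$ regarded as a left half-cut if $I_u\in u$ and $J_u$ regarded as a right half-cut if $J_u\in u$; supports equal iff same kind and equal as sets. $s(X)$ is the set of all supports of ultrafilters over $X$, linearly ordered by: $\{x\}<\{y\}$ iff $x<y$; $\{x\}<I$ iff $x\in I$, $I<\{x\}$ iff $x\notin I$; $\{x\}<J$ iff $x\notin J$, $J<\{x\}$ iff $x\in J$; $I<I'$ iff $I\subsetneq I'$; $J<J'$ iff $J\supsetneq J'$; $I<J$ iff $I\cap J=\emptyset$,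 $J<I$ iff $I\cap J\neq\emptyset$; $\min,\max$ on $s(X)$ are taken with respect to this order. *)

theory Defs
  imports Main
begin

text \<open>The linearly ordered set X is the universe of a type 'a::linorder.
  Ultrafilters over X are represented as sets of subsets of X.\<close>

definition is_uf :: "'a set set \<Rightarrow> bool" where
  "is_uf U \<longleftrightarrow> UNIV \<in> U \<and> {} \<notin> U
     \<and> (\<forall>A B. A \<in> U \<and> B \<in> U \<longrightarrow> A \<inter> B \<in> U)
     \<and> (\<forall>A B. A \<in> U \<and> A \<subseteq> B \<longrightarrow> B \<in> U)
     \<and> (\<forall>A. A \<in> U \<or> - A \<in> U)"

definition betaX :: "'a set set set" where
  "betaX = {U. is_uf U}"

definition principal_uf :: "'a \<Rightarrow> 'a set set" where
  "principal_uf x = {A. x \<in> A}"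

definition is_principal :: "'a set set \<Rightarrow> bool" where
  "is_principal u \<longleftrightarrow> (\<exists>x. u = principal_uf x)"

definition rel_ext :: "('a \<Rightarrow> 'a \<Rightarrow> bool) \<Rightarrow> 'a set set \<Rightarrow> 'a set set \<Rightarrow> bool" where
  "rel_ext R u v \<longleftrightarrow> {x. {y. R x y} \<in> v} \<in> u"

definition op_ext :: "('a \<Rightarrow> 'a \<Rightarrow> 'a) \<Rightarrow> 'a set set \<Rightarrow> 'a set set \<Rightarrow> 'a set set" where
  "op_ext F u v = {S. {x. {y. F x y \<in> S} \<in> v} \<in> u}"

abbreviation umin :: "'a::linorder set set \<Rightarrow> 'a set set \<Rightarrow> 'a set set" where
  "umin \<equiv> op_ext min"

abbreviation umax :: "'a::linorder set set \<Rightarrow> 'a set set \<Rightarrow> 'a set set" where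
  "umax \<equiv> op_ext max"

definition tri :: "'a::linorder set set \<Rightarrow> 'a set set \<Rightarrow> bool" where
  "tri u v \<longleftrightarrow> rel_ext (\<le>) u v \<or> rel_ext (\<ge>) v u"

definition ueq :: "'a::linorder set set \<Rightarrow> 'a set set \<Rightarrow> bool" where
  "ueq u v \<longleftrightarrow> tri u v \<and> tri v u"

definition relD :: "'a::linorder set set \<Rightarrow> 'a set set \<Rightarrow> bool" where
  "relD u v \<longleftrightarrow> umin (umin u v) u = u \<and> umin (umin v u) v = v"

definition is_congruence ::
  "'b set \<Rightarrow> ('b \<Rightarrow> 'b \<Rightarrow> 'b) \<Rightarrow> ('b \<Rightarrow> 'b \<Rightarrow> 'b) \<Rightarrow> ('b \<Rightarrow> 'b \<Rightarrow> bool) \<Rightarrow> bool" where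
  "is_congruence B f g R \<longleftrightarrow>
     (\<forall>x\<in>B. R x x) \<and> (\<forall>x\<in>B. \<forall>y\<in>B. R x y \<longrightarrow> R y x)
     \<and> (\<forall>x\<in>B. \<forall>y\<in>B. \<forall>z\<in>B. R x y \<and> R y z \<longrightarrow> R x z)
     \<and> (\<forall>x\<in>B. \<forall>x'\<in>B. \<forall>y\<in>B. \<forall>y'\<in>B. R x x' \<and> R y y' \<longrightarrow>
           R (f x y) (f x' y') \<and> R (g x y) (g x' y'))"

definition left_zero_band :: "'b set \<Rightarrow> ('b \<Rightarrow> 'b \<Rightarrow> 'b) \<Rightarrow> bool" where
  "left_zero_band B f \<longleftrightarrow> (\<forall>x\<in>B. \<forall>y\<in>B. f x y = x)"

definition right_zero_band :: "'b set \<Rightarrow> ('b \<Rightarrow> 'b \<Rightarrow> 'b) \<Rightarrow> bool" where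
  "right_zero_band B f \<longleftrightarrow> (\<forall>x\<in>B. \<forall>y\<in>B. f x y = y)"

definition initial_seg :: "'a::linorder set \<Rightarrow> bool" where
  "initial_seg I \<longleftrightarrow> (\<forall>x y. y \<in> I \<and> x \<le> y \<longrightarrow> x \<in> I)"

definition final_seg :: "'a::linorder set \<Rightarrow> bool" where
  "final_seg J \<longleftrightarrow> (\<forall>x y. y \<in> J \<and> y \<le> x \<longrightarrow> x \<in> J)"

definition I_u :: "'a::linorder set set \<Rightarrow> 'a set" where
  "I_u u = \<Inter> {I \<in> u. initial_seg I}"

definition J_u :: "'a::linorder set set \<Rightarrow> 'a set" where
  "J_u u = \<Inter> {J \<in> u. final_seg J}"

text \<open>Supports: a point, a left half-cut (given by an initial segment),
  or a right half-cut (given by a final segment).\<close>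
datatype 'a support = Pt 'a | LCut "'a set" | RCut "'a set"

definition supp :: "'a::linorder set set \<Rightarrow> 'a support" where
  "supp u = (if is_principal u then Pt (THE x. u = principal_uf x)
             else if I_u u \<in> u then LCut (I_u u) else RCut (J_u u))"

definition sX :: "'a::linorder support set" where
  "sX = supp ` betaX"

fun supp_less :: "'a::linorder support \<Rightarrow> 'a support \<Rightarrow> bool" where
  "supp_less (Pt x) (Pt y) \<longleftrightarrow> x < y"
| "supp_less (Pt x) (LCut I) \<longleftrightarrow> x \<in> I"
| "supp_less (LCut I) (Pt x) \<longleftrightarrow> x \<notin> I"
| "supp_less (Pt x) (RCut J) \<longleftrightarrow> x \<notin> J"
| "supp_less (RCut J) (Pt x) \<longleftrightarrow> x \<in> J"
| "supp_less (LCut I) (LCut I') \<longleftrightarrow> I \<subset> I'"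
| "supp_less (RCut J) (RCut J') \<longleftrightarrow> J' \<subset> J"
| "supp_less (LCut I) (RCut J) \<longleftrightarrow> I \<inter> J = {}"
| "supp_less (RCut J) (LCut I) \<longleftrightarrow> I \<inter> J \<noteq> {}"

definition supp_le :: "'a::linorder support \<Rightarrow> 'a support \<Rightarrow> bool" where
  "supp_le a b \<longleftrightarrow> a = b \<or> supp_less a b"

definition smin :: "'a::linorder support \<Rightarrow> 'a support \<Rightarrow> 'a support" where
  "smin a b = (if supp_le a b then a else b)"

definition smax :: "'a::linorder support \<Rightarrow> 'a support \<Rightarrow> 'a support" where
  "smax a b = (if supp_le a b then b else a)"

end

theory Submission
  imports Defs
begin


lemma uf_UNIV: "is_uf u \<Longrightarrow> UNIV \<in> u" by (simp add: is_uf_def)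
lemma uf_empty: "is_uf u \<Longrightarrow> {} \<notin> u" by (simp add: is_uf_def)
lemma uf_mono: "is_uf u \<Longrightarrow> A \<in> u \<Longrightarrow> A \<subseteq> B \<Longrightarrow> B \<in> u" unfolding is_uf_def by blast
lemma uf_int: "is_uf u \<Longrightarrow> A \<in> u \<Longrightarrow> B \<in> u \<Longrightarrow> A \<inter> B \<in> u" unfolding is_uf_def by blast
lemma uf_int_iff: "is_uf u \<Longrightarrow> A \<inter> B \<in> u \<longleftrightarrow> A \<in> u \<and> B \<in> u"
  by (meson Int_lower1 Int_lower2 uf_int uf_mono)
lemma uf_disj: "is_uf u \<Longrightarrow> A \<in> u \<Longrightarrow> A \<inter> B = {} \<Longrightarrow> B \<notin> u"
  by (metis uf_empty uf_int)
lemma uf_compl: "is_uf u \<Longrightarrow> - A \<in> u \<longleftrightarrow> A \<notin> u"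
  by (metis Compl_disjoint is_uf_def uf_disj)
lemma uf_agree: "is_uf u \<Longrightarrow> A \<in> u \<Longrightarrow> S \<inter> A = T \<inter> A \<Longrightarrow> S \<in> u \<longleftrightarrow> T \<in> u"
  by (metis uf_int_iff)

lemma ext_left:
  assumes u: "is_uf u" and v: "is_uf v" and A: "A \<in> u" and h: "\<forall>x\<in>A. \<exists>B\<in>v. \<forall>y\<in>B. F x y = x"
  shows "op_ext F u v = u"
proof (rule set_eqI)
  fix S
  have "{x. {y. F x y \<in> S} \<in> v} \<inter> A = S \<inter> A"
  proof (rule set_eqI)
    fix x show "x \<in> {x. {y. F x y \<in> S} \<in> v} \<inter> A \<longleftrightarrow> x \<in> S \<inter> A"
    proof (cases "x \<in> A")
      case True
      then obtain B where B: "B \<in> v" "\<forall>y\<in>B. F x y = x" using h by blast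
      show ?thesis
      proof (cases "x \<in> S")
        case True
        then have "B \<subseteq> {y. F x y \<in> S}" using B by auto
        then have "{y. F x y \<in> S} \<in> v" using uf_mono[OF v B(1)] by blast
        then show ?thesis using True \<open>x\<in>A\<close> by blast
      next
        case False
        then have "B \<inter> {y. F x y \<in> S} = {}" using B by auto
        then have "{y. F x y \<in> S} \<notin> v" using uf_disj[OF v B(1)] by blast
        then show ?thesis using False by blast
      qed
    qed simp
  qed
  from uf_agree[OF u A this] show "S \<in> op_ext F u v \<longleftrightarrow> S \<in> u" by (simp add: op_ext_def)
qed

lemma ext_right:
  assumes u: "is_uf u" and v: "is_uf v" and A: "A \<in> u" and h: "\<forall>x\<in>A. \<exists>B\<in>v. \<forall>y\<in>B. F x y = y"
  shows "op_ext F u v = v"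
proof (rule set_eqI)
  fix S
  have k: "{y. F x y \<in> S} \<in> v \<longleftrightarrow> S \<in> v" if "x \<in> A" for x
  proof -
    obtain B where B: "B \<in> v" "\<forall>y\<in>B. F x y = y" using h \<open>x \<in> A\<close> by blast
    have "{y. F x y \<in> S} \<inter> B = S \<inter> B" using B by auto
    from uf_agree[OF v B(1) this] show ?thesis .
  qed
  show "S \<in> op_ext F u v \<longleftrightarrow> S \<in> v"
  proof (cases "S \<in> v")
    case True
    then have "A \<subseteq> {x. {y. F x y \<in> S} \<in> v}" using k by blast
    then have "{x. {y. F x y \<in> S} \<in> v} \<in> u" using uf_mono[OF u A] by blast
    then show ?thesis using True by (simp add: op_ext_def)
  next
    case False
    then have "A \<inter> {x. {y. F x y \<in> S} \<in> v} = {}" using k by blast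
    then have "{x. {y. F x y \<in> S} \<in> v} \<notin> u" using uf_disj[OF u A] by blast
    then show ?thesis using False by (simp add: op_ext_def)
  qed
qed

lemma op_ext_uf: assumes u: "is_uf u" and v: "is_uf v" shows "is_uf (op_ext F u v)"
proof -
  define G where "G S = {x. {y. F x y \<in> S} \<in> v}" for S
  have oe: "op_ext F u v = {S. G S \<in> u}" by (simp add: op_ext_def G_def)
  have c: "G (- S) = - G S" for S
  proof -
    have "{y. F x y \<in> - S} = - {y. F x y \<in> S}" for x by auto
    then show ?thesis unfolding G_def using uf_compl[OF v] by auto
  qed
  have i: "G (S \<inter> T) = G S \<inter> G T" for S T
  proof -
    have "{y. F x y \<in> S \<inter> T} = {y. F x y \<in> S} \<inter> {y. F x y \<in> T}" for x by auto
    then show ?thesis unfolding G_def using uf_int_iff[OF v] by auto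
  qed
  have m: "S \<subseteq> T \<Longrightarrow> G S \<subseteq> G T" for S T
  proof -
    assume "S \<subseteq> T"
    then have "{y. F x y \<in> S} \<subseteq> {y. F x y \<in> T}" for x by auto
    then show ?thesis unfolding G_def using uf_mono[OF v] by blast
  qed
  have U: "G UNIV = UNIV" unfolding G_def using uf_UNIV[OF v] by simp
  have E: "G {} = {}" unfolding G_def using uf_empty[OF v] by simp
  show ?thesis unfolding oe is_uf_def
  proof (intro conjI allI impI)
    show "UNIV \<in> {S. G S \<in> u}" using U uf_UNIV[OF u] by simp
    show "{} \<notin> {S. G S \<in> u}" using E uf_empty[OF u] by simp
  next
    fix A B assume "A \<in> {S. G S \<in> u} \<and> B \<in> {S. G S \<in> u}"
    then show "A \<inter> B \<in> {S. G S \<in> u}" using i uf_int[OF u] by simp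
  next
    fix A B assume a: "A \<in> {S. G S \<in> u} \<and> A \<subseteq> B"
    then show "B \<in> {S. G S \<in> u}" using m[of A B] uf_mono[OF u] by blast
  next
    fix A
    show "A \<in> {S. G S \<in> u} \<or> - A \<in> {S. G S \<in> u}"
      using c[of A] uf_compl[OF u, of "G A"] by auto
  qed
qed



definition P :: "'a::linorder set set \<Rightarrow> 'a set" where
  "P u = {x. {y. x < y} \<in> u}"

lemma P_init: "is_uf u \<Longrightarrow> y \<in> P u \<Longrightarrow> x \<le> y \<Longrightarrow> x \<in> P u"
proof -
  assume u: "is_uf u" and y: "y \<in> P u" and xy: "x \<le> y"
  have "{w. y < w} \<subseteq> {w. x < w}" using xy by auto
  moreover have "{w. y < w} \<in> u" using y by (simp add: P_def)
  ultimately have "{w. x < w} \<in> u" using uf_mono[OF u] by blast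
  then show ?thesis by (simp add: P_def)
qed

lemma notP: "is_uf u \<Longrightarrow> z \<notin> P u \<Longrightarrow> {y. y \<le> z} \<in> u"
proof -
  assume u: "is_uf u" and "z \<notin> P u"
  then have "{y. z < y} \<notin> u" by (simp add: P_def)
  then have "- {y. z < y} \<in> u" using uf_compl[OF u] by blast
  moreover have "- {y. z < y} = {y. y \<le> z}" by auto
  ultimately show ?thesis by simp
qed

lemma inP: "is_uf u \<Longrightarrow> z \<in> P u \<Longrightarrow> {y. z < y} \<in> u"
  by (simp add: P_def)

lemma uf_principal: "is_uf (principal_uf x)"
  unfolding is_uf_def principal_uf_def by auto

lemma principal_inj: "principal_uf x = principal_uf y \<Longrightarrow> x = y"
proof -
  assume h: "principal_uf x = principal_uf y"
  have "{x} \<in> principal_uf x" by (simp add: principal_uf_def)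
  then have "{x} \<in> principal_uf y" using h by simp
  then show ?thesis by (simp add: principal_uf_def)
qed

lemma single_principal: "is_uf u \<Longrightarrow> {x} \<in> u \<Longrightarrow> u = principal_uf x"
proof -
  assume u: "is_uf u" and x: "{x} \<in> u"
  show ?thesis
  proof (rule set_eqI)
    fix A
    show "A \<in> u \<longleftrightarrow> A \<in> principal_uf x"
    proof
      assume "A \<in> u"
      then have "A \<inter> {x} \<noteq> {}" using uf_disj[OF u x] by blast
      then show "A \<in> principal_uf x" by (auto simp: principal_uf_def)
    next
      assume "A \<in> principal_uf x"
      then have "{x} \<subseteq> A" by (auto simp: principal_uf_def)
      then show "A \<in> u" using uf_mono[OF u x] by blast
    qed
  qed
qed

lemma nonpr_single: "is_uf u \<Longrightarrow> \<not> is_principal u \<Longrightarrow> {x} \<notin> u"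
proof
  assume u: "is_uf u" and np: "\<not> is_principal u" and x: "{x} \<in> u"
  have "u = principal_uf x" using single_principal[OF u x] .
  then have "is_principal u" unfolding is_principal_def by blast
  then show False using np by simp
qed

lemma supp_pt: "supp (principal_uf x) = Pt x"
proof -
  have "(THE y. principal_uf x = principal_uf y) = x"
    by (rule the_equality) (auto dest: principal_inj)
  moreover have "is_principal (principal_uf x)" by (auto simp: is_principal_def)
  ultimately show ?thesis by (simp add: supp_def)
qed

lemma P_pt: "P (principal_uf x) = {z. z < x}"
  unfolding P_def principal_uf_def by auto

lemma notP_lt: "is_uf u \<Longrightarrow> \<not> is_principal u \<Longrightarrow> z \<notin> P u \<Longrightarrow> {y. y < z} \<in> u"
proof -
  assume u: "is_uf u" and np: "\<not> is_principal u" and z: "z \<notin> P u"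
  have "{y. y \<le> z} \<in> u" using notP[OF u z] .
  moreover have "- {z} \<in> u" using nonpr_single[OF u np] uf_compl[OF u] by blast
  ultimately have "{y. y \<le> z} \<inter> - {z} \<in> u" using uf_int[OF u] by blast
  moreover have "{y. y \<le> z} \<inter> - {z} = {y. y < z}" by auto
  ultimately show ?thesis by simp
qed

lemma Iu_P: assumes u: "is_uf u" and np: "\<not> is_principal u" shows "I_u u = P u"
proof (rule set_eqI)
  fix z show "z \<in> I_u u \<longleftrightarrow> z \<in> P u"
  proof
    assume zI: "z \<in> I_u u"
    show "z \<in> P u"
    proof (rule ccontr)
      assume "z \<notin> P u"
      then have "{y. y < z} \<in> u" using notP_lt[OF u np] by blast
      moreover have "initial_seg {y. y < z}" unfolding initial_seg_def by auto
      ultimately have "I_u u \<subseteq> {y. y < z}" unfolding I_u_def by blast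
      then show False using zI by auto
    qed
  next
    assume zP: "z \<in> P u"
    show "z \<in> I_u u" unfolding I_u_def
    proof (rule InterI)
      fix I assume "I \<in> {I \<in> u. initial_seg I}"
      then have I: "I \<in> u" "initial_seg I" by auto
      have "I \<inter> {y. z < y} \<in> u" using uf_int[OF u I(1) inP[OF u zP]] .
      then have "I \<inter> {y. z < y} \<noteq> {}" using uf_empty[OF u] by force
      then obtain y where "y \<in> I" "z < y" by blast
      then show "z \<in> I" using I(2) unfolding initial_seg_def by (blast intro: less_imp_le)
    qed
  qed
qed

lemma Ju_P: assumes u: "is_uf u" and np: "\<not> is_principal u" shows "J_u u = - P u"
proof (rule set_eqI)
  fix z show "z \<in> J_u u \<longleftrightarrow> z \<in> - P u"
  proof
    assume zJ: "z \<in> J_u u"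
    show "z \<in> - P u"
    proof (rule ccontr)
      assume "z \<notin> - P u"
      then have "{y. z < y} \<in> u" using inP[OF u] by blast
      moreover have "final_seg {y. z < y}" unfolding final_seg_def by auto
      ultimately have "J_u u \<subseteq> {y. z < y}" unfolding J_u_def by blast
      then show False using zJ by auto
    qed
  next
    assume zP: "z \<in> - P u"
    show "z \<in> J_u u" unfolding J_u_def
    proof (rule InterI)
      fix J assume "J \<in> {J \<in> u. final_seg J}"
      then have J: "J \<in> u" "final_seg J" by auto
      have "J \<inter> {y. y < z} \<in> u" using uf_int[OF u J(1) notP_lt[OF u np]] zP by blast
      then have "J \<inter> {y. y < z} \<noteq> {}" using uf_empty[OF u] by force
      then obtain y where "y \<in> J" "y < z" by blast
      then show "z \<in> J" using J(2) unfolding final_seg_def by (blast intro: less_imp_le)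
    qed
  qed
qed

lemma cls:
  assumes u: "is_uf u"
  shows "(\<exists>x. u = principal_uf x) \<or>
    (\<not> is_principal u \<and> P u \<in> u \<and> I_u u = P u \<and> J_u u = - P u \<and> supp u = LCut (P u)) \<or>
    (\<not> is_principal u \<and> - P u \<in> u \<and> P u \<notin> u \<and> I_u u = P u \<and> J_u u = - P u \<and> supp u = RCut (- P u))"
proof (cases "is_principal u")
  case True then show ?thesis by (auto simp: is_principal_def)
next
  case False
  note I = Iu_P[OF u False] and J = Ju_P[OF u False]
  show ?thesis
  proof (cases "P u \<in> u")
    case True then show ?thesis using False I J by (simp add: supp_def)
  next
    case F2: False
    then have "- P u \<in> u" using uf_compl[OF u] by blast
    then show ?thesis using False F2 I J by (simp add: supp_def)
  qed
qed



definition sepr :: "'a::linorder set set \<Rightarrow> 'a set set \<Rightarrow> bool" where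
  "sepr u v \<longleftrightarrow> (\<exists>A\<in>u. \<exists>B\<in>v. \<forall>a\<in>A. \<forall>b\<in>B. a < b)"

lemma sep_facts:
  assumes u: "is_uf u" and v: "is_uf v" and s: "sepr u v"
  shows "umin u v = u \<and> umin v u = u \<and> umax u v = v \<and> umax v u = v \<and> tri u v \<and> \<not> tri v u \<and> u \<noteq> v"
proof -
  obtain A B where A: "A \<in> u" and B: "B \<in> v" and lt: "\<forall>a\<in>A. \<forall>b\<in>B. a < b"
    using s unfolding sepr_def by blast
  have 1: "umin u v = u"
  proof (rule ext_left[OF u v A], rule ballI)
    fix x assume x: "x \<in> A"
    have "\<forall>y\<in>B. min x y = x" using lt x by (simp add: min_absorb1 less_imp_le)
    then show "\<exists>B\<in>v. \<forall>y\<in>B. min x y = x" using B by blast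
  qed
  have 2: "umin v u = u"
  proof (rule ext_right[OF v u B], rule ballI)
    fix x assume x: "x \<in> B"
    have "\<forall>y\<in>A. min x y = y" using lt x by (simp add: min_absorb2 less_imp_le)
    then show "\<exists>B\<in>u. \<forall>y\<in>B. min x y = y" using A by blast
  qed
  have 3: "umax u v = v"
  proof (rule ext_right[OF u v A], rule ballI)
    fix x assume x: "x \<in> A"
    have "\<forall>y\<in>B. max x y = y" using lt x by (simp add: max_absorb2 less_imp_le)
    then show "\<exists>B\<in>v. \<forall>y\<in>B. max x y = y" using B by blast
  qed
  have 4: "umax v u = v"
  proof (rule ext_left[OF v u B], rule ballI)
    fix x assume x: "x \<in> B"
    have "\<forall>y\<in>A. max x y = x" using lt x by (simp add: max_absorb1 less_imp_le)
    then show "\<exists>B\<in>u. \<forall>y\<in>B. max x y = x" using A by blast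
  qed
  have "A \<subseteq> {x. {y. x \<le> y} \<in> v}"
  proof
    fix x assume "x \<in> A"
    then have "B \<subseteq> {y. x \<le> y}" using lt by (auto intro: less_imp_le)
    then show "x \<in> {x. {y. x \<le> y} \<in> v}" using uf_mono[OF v B] by blast
  qed
  then have 5: "tri u v" unfolding tri_def rel_ext_def using uf_mono[OF u A] by blast
  have "B \<inter> {x. {y. x \<le> y} \<in> u} = {}"
  proof -
    have "{y. x \<le> y} \<notin> u" if "x \<in> B" for x
    proof -
      have "A \<inter> {y. x \<le> y} = {}" using lt that by (auto simp: not_le[symmetric])
      then show ?thesis using uf_disj[OF u A] by blast
    qed
    then show ?thesis by blast
  qed
  then have 6: "\<not> rel_ext (\<le>) v u" unfolding rel_ext_def using uf_disj[OF v B] by blast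
  have "A \<inter> {x. {y. y \<le> x} \<in> v} = {}"
  proof -
    have "{y. y \<le> x} \<notin> v" if "x \<in> A" for x
    proof -
      have "B \<inter> {y. y \<le> x} = {}" using lt that by (auto simp: not_le[symmetric])
      then show ?thesis using uf_disj[OF v B] by blast
    qed
    then show ?thesis by blast
  qed
  then have 7: "\<not> rel_ext (\<ge>) u v" unfolding rel_ext_def using uf_disj[OF u A] by blast
  have 8: "u \<noteq> v"
  proof
    assume "u = v"
    have "A \<inter> B = {}" using lt by auto
    then show False using uf_disj[OF u A] B \<open>u = v\<close> by blast
  qed
  show ?thesis using 1 2 3 4 5 6 7 8 unfolding tri_def by blast
qed

lemma Lfacts:
  assumes u: "is_uf u" and v: "is_uf v" and e: "P u = P v" and Pu: "P u \<in> u"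
  shows "umin u v = u \<and> umax u v = v \<and> tri u v"
proof -
  have 1: "umin u v = u"
  proof (rule ext_left[OF u v Pu], rule ballI)
    fix x assume "x \<in> P u"
    then have "{y. x < y} \<in> v" using inP[OF v] e by simp
    moreover have "\<forall>y\<in>{y. x < y}. min x y = x" by (simp add: min_absorb1 less_imp_le)
    ultimately show "\<exists>B\<in>v. \<forall>y\<in>B. min x y = x" by blast
  qed
  have 2: "umax u v = v"
  proof (rule ext_right[OF u v Pu], rule ballI)
    fix x assume "x \<in> P u"
    then have "{y. x < y} \<in> v" using inP[OF v] e by simp
    moreover have "\<forall>y\<in>{y. x < y}. max x y = y" by (simp add: max_absorb2 less_imp_le)
    ultimately show "\<exists>B\<in>v. \<forall>y\<in>B. max x y = y" by blast
  qed
  have "P u \<subseteq> {x. {y. x \<le> y} \<in> v}"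
  proof
    fix x assume "x \<in> P u"
    then have "{y. x < y} \<in> v" using inP[OF v] e by simp
    moreover have "{y. x < y} \<subseteq> {y. x \<le> y}" by (auto intro: less_imp_le)
    ultimately show "x \<in> {x. {y. x \<le> y} \<in> v}" using uf_mono[OF v] by blast
  qed
  then have "tri u v" unfolding tri_def rel_ext_def using uf_mono[OF u Pu] by blast
  then show ?thesis using 1 2 by blast
qed

lemma Rfacts:
  assumes u: "is_uf u" and v: "is_uf v" and np: "\<not> is_principal v" and e: "P u = P v"
    and Pu: "- P u \<in> u" and Pv: "- P u \<in> v"
  shows "umin u v = v \<and> umax u v = u \<and> tri u v"
proof -
  have 1: "umin u v = v"
  proof (rule ext_right[OF u v Pu], rule ballI)
    fix x assume "x \<in> - P u"
    then have "{y. y < x} \<in> v" using notP_lt[OF v np] e by simp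
    moreover have "\<forall>y\<in>{y. y < x}. min x y = y" by (simp add: min_absorb2 less_imp_le)
    ultimately show "\<exists>B\<in>v. \<forall>y\<in>B. min x y = y" by blast
  qed
  have 2: "umax u v = u"
  proof (rule ext_left[OF u v Pu], rule ballI)
    fix x assume "x \<in> - P u"
    then have "{y. y < x} \<in> v" using notP_lt[OF v np] e by simp
    moreover have "\<forall>y\<in>{y. y < x}. max x y = x" by (simp add: max_absorb1 less_imp_le)
    ultimately show "\<exists>B\<in>v. \<forall>y\<in>B. max x y = x" by blast
  qed
  have "- P u \<subseteq> {x. {y. y \<le> x} \<in> u}"
  proof
    fix x assume "x \<in> - P u"
    then have "{y. y \<le> x} \<in> u" using notP[OF u] by blast
    then show "x \<in> {x. {y. y \<le> x} \<in> u}" by simp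
  qed
  then have "rel_ext (\<ge>) v u" unfolding rel_ext_def using uf_mono[OF v Pv] by blast
  then have "tri u v" unfolding tri_def by blast
  then show ?thesis using 1 2 by blast
qed



lemma lt_of_P: "is_uf u \<Longrightarrow> a \<in> P u \<Longrightarrow> b \<notin> P u \<Longrightarrow> a < b"
  using P_init not_less by blast

lemma pt_mem: "{x} \<in> principal_uf x" by (simp add: principal_uf_def)

lemma sub_P: assumes u: "is_uf u" and v: "is_uf v" and zu: "z \<notin> P u" and zv: "z \<in> P v"
  shows "P u \<subseteq> P v"
proof
  fix w assume "w \<in> P u"
  then have "w < z" using lt_of_P[OF u _ zu] by blast
  then show "w \<in> P v" using P_init[OF v zv] by (simp add: less_imp_le)
qed

lemma trich_z:
  assumes u: "is_uf u" and v: "is_uf v" and zu: "z \<notin> P u" and zv: "z \<in> P v"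
  shows "sepr u v \<and> supp_less (supp u) (supp v)"
proof -
  have A: "{y. y \<le> z} \<in> u" using notP[OF u zu] .
  have B: "{y. z < y} \<in> v" using inP[OF v zv] .
  have s: "sepr u v" unfolding sepr_def
  proof (intro bexI[OF _ A] bexI[OF _ B] ballI)
    fix a b assume "a \<in> {y. y \<le> z}" "b \<in> {y. z < y}"
    then show "a < b" by simp
  qed
  have sub: "P u \<subseteq> P v" using sub_P[OF u v zu zv] .
  have yn: "y \<notin> P u" if "z < y" for y
    using P_init[OF u _ less_imp_le[OF that]] zu by blast
  have xin: "x \<in> P v" if "x \<le> z" for x using P_init[OF v zv that] .
  have "supp_less (supp u) (supp v)"
    using cls[OF u]
  proof (elim disjE conjE exE)
    fix x assume ux: "u = principal_uf x"
    then have xz: "x \<le> z" using zu by (simp add: P_pt not_less)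
    have su: "supp u = Pt x" using ux supp_pt by simp
    show ?thesis using cls[OF v]
    proof (elim disjE conjE exE)
      fix y assume vy: "v = principal_uf y"
      then have "z < y" using zv by (simp add: P_pt)
      then show ?thesis using vy su xz by (simp add: supp_pt)
    next
      assume "supp v = LCut (P v)" then show ?thesis using su xin[OF xz] by simp
    next
      assume "supp v = RCut (- P v)" then show ?thesis using su xin[OF xz] by simp
    qed
  next
    assume su: "supp u = LCut (P u)"
    show ?thesis using cls[OF v]
    proof (elim disjE conjE exE)
      fix y assume vy: "v = principal_uf y"
      then have "z < y" using zv by (simp add: P_pt)
      then show ?thesis using vy su yn by (simp add: supp_pt)
    next
      assume "supp v = LCut (P v)" then show ?thesis using su sub zu zv by auto
    next
      assume "supp v = RCut (- P v)" then show ?thesis using su sub by auto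
    qed
  next
    assume su: "supp u = RCut (- P u)"
    show ?thesis using cls[OF v]
    proof (elim disjE conjE exE)
      fix y assume vy: "v = principal_uf y"
      then have "z < y" using zv by (simp add: P_pt)
      then show ?thesis using vy su yn by (simp add: supp_pt)
    next
      assume "supp v = LCut (P v)" then show ?thesis using su zu zv by auto
    next
      assume "supp v = RCut (- P v)" then show ?thesis using su sub zu zv by auto
    qed
  qed
  then show ?thesis using s by blast
qed



lemma pt_vs_R_false:
  assumes v: "is_uf v" and np: "\<not> is_principal v" and e: "P v = {w. w < x}" and R: "- P v \<in> v"
  shows False
proof -
  have "x \<notin> P v" using e by simp
  then have "{y. y \<le> x} \<in> v" by (rule notP[OF v])
  then have I: "- P v \<inter> {y. y \<le> x} \<in> v" by (rule uf_int[OF v R])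
  have "- P v \<inter> {y. y \<le> x} \<subseteq> {x}"
  proof
    fix w assume "w \<in> - P v \<inter> {y. y \<le> x}"
    then have "\<not> w < x" "w \<le> x" using e by auto
    then show "w \<in> {x}" by simp
  qed
  then have "{x} \<in> v" by (rule uf_mono[OF v I])
  then show False using nonpr_single[OF v np] by simp
qed

lemma pt_vs_L:
  assumes v: "is_uf v" and e: "P v = {w. w < x}" and L: "P v \<in> v"
  shows "sepr v (principal_uf x)"
  unfolding sepr_def
proof (intro bexI[OF _ L] bexI[OF _ pt_mem] ballI)
  fix a b assume "a \<in> P v" "b \<in> {x}" then show "a < b" using e by simp
qed

lemma L_vs_R:
  assumes u: "is_uf u" and L: "P u \<in> u" and R: "- P u \<in> v"
  shows "sepr u v"
  unfolding sepr_def
proof (intro bexI[OF _ L] bexI[OF _ R] ballI)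
  fix a b assume "a \<in> P u" "b \<in> - P u" then show "a < b" using lt_of_P[OF u] by simp
qed

lemma trich_eq:
  assumes u: "is_uf u" and v: "is_uf v" and e: "P u = P v"
  shows "supp u = supp v \<or> (sepr u v \<and> supp_less (supp u) (supp v)) \<or> (sepr v u \<and> supp_less (supp v) (supp u))"
  using cls[OF u]
proof (elim disjE conjE exE)
  fix x assume ux: "u = principal_uf x"
  then have Pu: "P u = {w. w < x}" by (simp add: P_pt)
  have su: "supp u = Pt x" using ux supp_pt by simp
  show ?thesis using cls[OF v]
  proof (elim disjE conjE exE)
    fix y assume vy: "v = principal_uf y"
    have "{w. w < x} = {w. w < y}" using Pu e vy by (simp add: P_pt)
    then have h: "\<And>w. w < x \<longleftrightarrow> w < y" by (simp add: set_eq_iff)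
    have "\<not> x < y" using h[of x] by simp
    moreover have "\<not> y < x" using h[of y] by simp
    ultimately have "x = y" by simp
    then show ?thesis using ux vy by simp
  next
    assume L: "P v \<in> v" and sv: "supp v = LCut (P v)"
    have "sepr v u" using pt_vs_L[OF v _ L] Pu e ux by simp
    moreover have "x \<notin> P v" using Pu e by simp
    ultimately show ?thesis using su sv by simp
  next
    assume np: "\<not> is_principal v" and R: "- P v \<in> v"
    have "P v = {w. w < x}" using Pu e by simp
    from pt_vs_R_false[OF v np this R] show ?thesis ..
  qed
next
  assume npu: "\<not> is_principal u" and Lu: "P u \<in> u" and su: "supp u = LCut (P u)"
  show ?thesis using cls[OF v]
  proof (elim disjE conjE exE)
    fix y assume vy: "v = principal_uf y"
    have "sepr u v" using pt_vs_L[OF u _ Lu] e vy by (simp add: P_pt)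
    moreover have "y \<notin> P u" using e vy by (simp add: P_pt)
    ultimately show ?thesis using su vy by (simp add: supp_pt)
  next
    assume "supp v = LCut (P v)" then show ?thesis using su e by simp
  next
    assume R: "- P v \<in> v" and sv: "supp v = RCut (- P v)"
    have "sepr u v" using L_vs_R[OF u Lu] R e by simp
    then show ?thesis using su sv e by simp
  qed
next
  assume npu: "\<not> is_principal u" and Ru: "- P u \<in> u" and su: "supp u = RCut (- P u)"
  show ?thesis using cls[OF v]
  proof (elim disjE conjE exE)
    fix y assume vy: "v = principal_uf y"
    have "P u = {w. w < y}" using e vy by (simp add: P_pt)
    from pt_vs_R_false[OF u npu this Ru] show ?thesis ..
  next
    assume L: "P v \<in> v" and sv: "supp v = LCut (P v)"
    have "sepr v u" using L_vs_R[OF v L] Ru e by simp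
    then show ?thesis using su sv e by simp
  next
    assume "supp v = RCut (- P v)" then show ?thesis using su e by simp
  qed
qed

lemma trich:
  assumes u: "is_uf u" and v: "is_uf v"
  shows "supp u = supp v \<or> (sepr u v \<and> supp_less (supp u) (supp v)) \<or> (sepr v u \<and> supp_less (supp v) (supp u))"
proof (cases "P u = P v")
  case True then show ?thesis using trich_eq[OF u v] by blast
next
  case False
  then obtain z where "(z \<notin> P u \<and> z \<in> P v) \<or> (z \<notin> P v \<and> z \<in> P u)" by blast
  then show ?thesis
  proof (elim disjE conjE)
    assume "z \<notin> P u" "z \<in> P v"
    from trich_z[OF u v this] show ?thesis by simp
  next
    assume "z \<notin> P v" "z \<in> P u"
    from trich_z[OF v u this] show ?thesis by simp
  qed
qed



lemma supp_less_irrefl: "\<not> supp_less a a"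
  by (cases a) auto

lemma supp_less_asym: "supp_less a b \<Longrightarrow> \<not> supp_less b a"
  by (cases a; cases b) auto

lemma principal_facts:
  "umin (principal_uf x) (principal_uf x) = principal_uf x \<and>
   umax (principal_uf x) (principal_uf x) = principal_uf x \<and>
   tri (principal_uf x) (principal_uf x)"
proof -
  let ?u = "principal_uf x"
  have u: "is_uf ?u" by (rule uf_principal)
  have 1: "umin ?u ?u = ?u"
  proof (rule ext_left[OF u u pt_mem], rule ballI)
    fix z assume "z \<in> {x}"
    then have "\<forall>y\<in>{x}. min z y = z" by simp
    then show "\<exists>B\<in>?u. \<forall>y\<in>B. min z y = z" using pt_mem[of x] by (rule bexI)
  qed
  have 2: "umax ?u ?u = ?u"
  proof (rule ext_left[OF u u pt_mem], rule ballI)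
    fix z assume "z \<in> {x}"
    then have "\<forall>y\<in>{x}. max z y = z" by simp
    then show "\<exists>B\<in>?u. \<forall>y\<in>B. max z y = z" using pt_mem[of x] by (rule bexI)
  qed
  have "rel_ext (\<le>) ?u ?u" unfolding rel_ext_def principal_uf_def mem_Collect_eq by (rule order_refl)
  then have 3: "tri ?u ?u" unfolding tri_def by blast
  show ?thesis using 1 2 3 by blast
qed

definition "C1 u v \<longleftrightarrow> (u = v \<and> umin u u = u \<and> umax u u = u \<and> tri u u \<and> is_principal u)"
definition "C2 u v \<longleftrightarrow> (supp u = supp v \<and> (\<exists>I. supp u = LCut I) \<and> umin u v = u \<and> umin v u = v \<and> umax u v = v \<and> umax v u = u \<and> tri u v \<and> tri v u)"
definition "C3 u v \<longleftrightarrow> (supp u = supp v \<and> (\<exists>J. supp u = RCut J) \<and> umin u v = v \<and> umin v u = u \<and> umax u v = u \<and> umax v u = v \<and> tri u v \<and> tri v u)"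
definition "C4 u v \<longleftrightarrow> (supp u \<noteq> supp v \<and> u \<noteq> v \<and> umin u v = u \<and> umin v u = u \<and> umax u v = v \<and> umax v u = v \<and> tri u v \<and> \<not> tri v u \<and> supp_less (supp u) (supp v))"
definition "C5 u v \<longleftrightarrow> (supp u \<noteq> supp v \<and> u \<noteq> v \<and> umin u v = v \<and> umin v u = v \<and> umax u v = u \<and> umax v u = u \<and> \<not> tri u v \<and> tri v u \<and> supp_less (supp v) (supp u))"

lemma full:
  assumes u: "is_uf u" and v: "is_uf v"
  shows "C1 u v \<or> C2 u v \<or> C3 u v \<or> C4 u v \<or> C5 u v"
proof -
  consider (eq) "supp u = supp v" | (lt) "sepr u v" "supp_less (supp u) (supp v)"
    | (gt) "sepr v u" "supp_less (supp v) (supp u)"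
    using trich[OF u v] by blast
  then show ?thesis
  proof cases
    case lt
    have ne: "supp u \<noteq> supp v" using lt(2) supp_less_irrefl[of "supp u"] by auto
    have "umin u v = u \<and> umin v u = u \<and> umax u v = v \<and> umax v u = v \<and> tri u v \<and> \<not> tri v u \<and> u \<noteq> v"
      by (rule sep_facts[OF u v lt(1)])
    then have "C4 u v" unfolding C4_def using ne lt(2) by simp
    then show ?thesis by simp
  next
    case gt
    have ne: "supp u \<noteq> supp v" using gt(2) supp_less_irrefl[of "supp u"] by auto
    have "umin v u = v \<and> umin u v = v \<and> umax v u = u \<and> umax u v = u \<and> tri v u \<and> \<not> tri u v \<and> v \<noteq> u"
      by (rule sep_facts[OF v u gt(1)])
    then have "C5 u v" unfolding C5_def using ne gt(2) by auto
    then show ?thesis by simp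
  next
    case eq
    show ?thesis using cls[OF u]
    proof (elim disjE conjE exE)
      fix x assume ux: "u = principal_uf x"
      show ?thesis using cls[OF v]
      proof (elim disjE conjE exE)
        fix y assume vy: "v = principal_uf y"
        have "x = y" using eq ux vy by (simp add: supp_pt)
        moreover have "is_principal u" using ux unfolding is_principal_def by blast
        ultimately have "C1 u v" unfolding C1_def using ux vy principal_facts[of x] by simp
        then show ?thesis by simp
      next
        assume "supp v = LCut (P v)" then show ?thesis using eq ux by (simp add: supp_pt)
      next
        assume "supp v = RCut (- P v)" then show ?thesis using eq ux by (simp add: supp_pt)
      qed
    next
      assume npu: "\<not> is_principal u" and Lu: "P u \<in> u" and su: "supp u = LCut (P u)"
      show ?thesis using cls[OF v]
      proof (elim disjE conjE exE)
        fix y assume vy: "v = principal_uf y"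
        then show ?thesis using eq su by (simp add: supp_pt)
      next
        assume Lv: "P v \<in> v" and sv: "supp v = LCut (P v)"
        have e: "P u = P v" using eq su sv by simp
        have a: "umin u v = u \<and> umax u v = v \<and> tri u v" by (rule Lfacts[OF u v e Lu])
        have b: "umin v u = v \<and> umax v u = u \<and> tri v u" by (rule Lfacts[OF v u e[symmetric] Lv])
        have "C2 u v" unfolding C2_def using a b eq su by metis
        then show ?thesis by simp
      next
        assume "supp v = RCut (- P v)" then show ?thesis using eq su by simp
      qed
    next
      assume npu: "\<not> is_principal u" and Ru: "- P u \<in> u" and su: "supp u = RCut (- P u)"
      show ?thesis using cls[OF v]
      proof (elim disjE conjE exE)
        fix y assume vy: "v = principal_uf y"
        then show ?thesis using eq su by (simp add: supp_pt)
      next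
        assume "supp v = LCut (P v)" then show ?thesis using eq su by simp
      next
        assume npv: "\<not> is_principal v" and Rv: "- P v \<in> v" and sv: "supp v = RCut (- P v)"
        have e: "P u = P v" using eq su sv by simp
        have Ruv: "- P u \<in> v" using Rv e by simp
        have Rvu: "- P v \<in> u" using Ru e by simp
        have a: "umin u v = v \<and> umax u v = u \<and> tri u v" by (rule Rfacts[OF u v npv e Ru Ruv])
        have b: "umin v u = u \<and> umax v u = v \<and> tri v u" by (rule Rfacts[OF v u npu e[symmetric] Rv Rvu])
        have "C3 u v" unfolding C3_def using a b eq su by metis
        then show ?thesis by simp
      qed
    qed
  qed
qed



lemma bX: "u \<in> betaX \<longleftrightarrow> is_uf u" by (simp add: betaX_def)

lemma idem: assumes u: "is_uf u" shows "umin u u = u \<and> umax u u = u \<and> tri u u"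
  using full[OF u u] unfolding C1_def C2_def C3_def C4_def C5_def by blast

lemma ueq_supp: assumes u: "is_uf u" and v: "is_uf v" shows "ueq u v \<longleftrightarrow> supp u = supp v"
  using full[OF u v] unfolding C1_def C2_def C3_def C4_def C5_def ueq_def by blast

lemma part1: assumes u: "is_uf u" and v: "is_uf v"
  shows "(tri u v \<longleftrightarrow> (umin u v = u \<or> umin v u = u))
    \<and> (tri u v \<longleftrightarrow> (umin u v = u \<or> umin u v \<noteq> umin v u))
    \<and> (tri u v \<longleftrightarrow> (umax u v = v \<or> umax v u = v))
    \<and> (tri u v \<longleftrightarrow> (umax u v = v \<or> umax u v \<noteq> umax v u))
    \<and> (ueq u v \<longleftrightarrow> (umin u v \<noteq> umin v u \<or> u = v))
    \<and> (ueq u v \<longleftrightarrow> (umax u v \<noteq> umax v u \<or> u = v))"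
  using full[OF u v]
proof (elim disjE)
  assume "C1 u v" then show ?thesis unfolding C1_def ueq_def by auto
next
  assume "C2 u v" then show ?thesis unfolding C2_def ueq_def by auto
next
  assume "C3 u v" then show ?thesis unfolding C3_def ueq_def by auto
next
  assume "C4 u v" then show ?thesis unfolding C4_def ueq_def by auto
next
  assume "C5 u v" then show ?thesis unfolding C5_def ueq_def by auto
qed

lemma relD_iff: assumes u: "is_uf u" and v: "is_uf v" shows "ueq u v \<longleftrightarrow> relD u v"
  using full[OF u v]
proof (elim disjE)
  assume "C1 u v" then show ?thesis unfolding C1_def ueq_def relD_def by auto
next
  assume "C2 u v" then show ?thesis unfolding C2_def ueq_def relD_def using idem[OF u] idem[OF v] by auto
next
  assume "C3 u v" then show ?thesis unfolding C3_def ueq_def relD_def by auto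
next
  assume "C4 u v" then show ?thesis unfolding C4_def ueq_def relD_def by auto
next
  assume "C5 u v" then show ?thesis unfolding C5_def ueq_def relD_def by auto
qed

lemma supp_ops: assumes u: "is_uf u" and v: "is_uf v"
  shows "supp (umin u v) = smin (supp u) (supp v) \<and> supp (umax u v) = smax (supp u) (supp v)"
  using full[OF u v]
proof (elim disjE)
  assume "C1 u v" then show ?thesis unfolding C1_def smin_def smax_def supp_le_def by auto
next
  assume "C2 u v" then show ?thesis unfolding C2_def smin_def smax_def supp_le_def by auto
next
  assume "C3 u v" then show ?thesis unfolding C3_def smin_def smax_def supp_le_def by auto
next
  assume "C4 u v" then show ?thesis unfolding C4_def smin_def smax_def supp_le_def by auto
next
  assume "C5 u v" then show ?thesis unfolding C5_def smin_def smax_def supp_le_def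
    using supp_less_asym[of "supp v" "supp u"] by auto
qed

lemma compat:
  assumes a: "is_uf x" "is_uf x'" "is_uf y" "is_uf y'" and h: "ueq x x'" "ueq y y'"
  shows "ueq (umax x y) (umax x' y') \<and> ueq (umin x y) (umin x' y')"
proof -
  have s: "supp x = supp x'" "supp y = supp y'" using h ueq_supp a by metis+
  have c: "is_uf (umax x y)" "is_uf (umax x' y')" "is_uf (umin x y)" "is_uf (umin x' y')"
    using op_ext_uf a by blast+
  have "supp (umax x y) = supp (umax x' y')" using supp_ops[OF a(1) a(3)] supp_ops[OF a(2) a(4)] s by simp
  moreover have "supp (umin x y) = supp (umin x' y')" using supp_ops[OF a(1) a(3)] supp_ops[OF a(2) a(4)] s by simp
  ultimately show ?thesis
    using ueq_supp[OF c(1) c(2)] ueq_supp[OF c(3) c(4)] by simp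
qed

lemma cong: "is_congruence (betaX :: 'a::linorder set set set) umax umin ueq"
  unfolding is_congruence_def
proof (intro conjI ballI impI)
  fix x :: "'a set set" assume "x \<in> betaX" then show "ueq x x" using ueq_supp bX by blast
next
  fix x y :: "'a set set" assume "x \<in> betaX" "y \<in> betaX" "ueq x y" then show "ueq y x" using ueq_supp bX by metis
next
  fix x y z :: "'a set set" assume "x \<in> betaX" "y \<in> betaX" "z \<in> betaX" "ueq x y \<and> ueq y z"
  then show "ueq x z" using ueq_supp bX by metis
next
  fix x x' y y' :: "'a set set" assume a0: "x \<in> betaX" "x' \<in> betaX" "y \<in> betaX" "y' \<in> betaX" and h: "ueq x x' \<and> ueq y y'"
  have a: "is_uf x" "is_uf x'" "is_uf y" "is_uf y'" using a0 bX by auto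
  show "ueq (umax x y) (umax x' y')" using compat[OF a] h by blast
next
  fix x x' y y' :: "'a set set" assume a0: "x \<in> betaX" "x' \<in> betaX" "y \<in> betaX" "y' \<in> betaX" and h: "ueq x x' \<and> ueq y y'"
  have a: "is_uf x" "is_uf x'" "is_uf y" "is_uf y'" using a0 bX by auto
  show "ueq (umin x y) (umin x' y')" using compat[OF a] h by blast
qed

lemma bands: assumes u: "is_uf u"
  shows "(is_principal u \<longrightarrow> {v\<in>betaX. ueq u v} = {u})
      \<and> (\<not> is_principal u \<and> I_u u \<in> u \<longrightarrow>
           left_zero_band {v\<in>betaX. ueq u v} umin \<and> right_zero_band {v\<in>betaX. ueq u v} umax)
      \<and> (\<not> is_principal u \<and> J_u u \<in> u \<longrightarrow>
           right_zero_band {v\<in>betaX. ueq u v} umin \<and> left_zero_band {v\<in>betaX. ueq u v} umax)"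
proof (intro conjI impI)
  assume pu: "is_principal u"
  then obtain x where ux: "u = principal_uf x" unfolding is_principal_def by blast
  have su: "supp u = Pt x" using ux supp_pt by simp
  show "{v\<in>betaX. ueq u v} = {u}"
  proof (rule set_eqI, rule iffI)
    fix v assume "v \<in> {v\<in>betaX. ueq u v}"
    then have v: "is_uf v" and e: "ueq u v" by (auto simp: bX)
    have "v = u" using full[OF u v] e su unfolding C1_def C2_def C3_def C4_def C5_def ueq_def by auto
    then show "v \<in> {u}" by simp
  next
    fix v assume "v \<in> {u}"
    then show "v \<in> {v\<in>betaX. ueq u v}" using u ueq_supp[OF u u] by (simp add: bX)
  qed
next
  assume h: "\<not> is_principal u \<and> I_u u \<in> u"
  then have su: "supp u = LCut (I_u u)" by (simp add: supp_def)
  have k: "umin x y = x \<and> umax x y = y" if "x \<in> {v\<in>betaX. ueq u v}" "y \<in> {v\<in>betaX. ueq u v}" for x y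
  proof -
    have x: "is_uf x" and y: "is_uf y" using that by (auto simp: bX)
    have "supp x = supp u" "supp y = supp u" using that ueq_supp[OF u x] ueq_supp[OF u y] by auto
    then show ?thesis using full[OF x y] su idem[OF x] unfolding C1_def C2_def C3_def C4_def C5_def by auto
  qed
  show "left_zero_band {v\<in>betaX. ueq u v} umin" unfolding left_zero_band_def using k by blast
  show "right_zero_band {v\<in>betaX. ueq u v} umax" unfolding right_zero_band_def using k by blast
next
  assume h: "\<not> is_principal u \<and> J_u u \<in> u"
  have "J_u u = - I_u u" using Iu_P[OF u] Ju_P[OF u] h by simp
  then have "I_u u \<notin> u" using h uf_compl[OF u] by simp
  then have su: "supp u = RCut (J_u u)" using h by (simp add: supp_def)
  have k: "umin x y = y \<and> umax x y = x" if "x \<in> {v\<in>betaX. ueq u v}" "y \<in> {v\<in>betaX. ueq u v}" for x y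
  proof -
    have x: "is_uf x" and y: "is_uf y" using that by (auto simp: bX)
    have "supp x = supp u" "supp y = supp u" using that ueq_supp[OF u x] ueq_supp[OF u y] by auto
    then show ?thesis using full[OF x y] su idem[OF x] unfolding C1_def C2_def C3_def C4_def C5_def by auto
  qed
  show "right_zero_band {v\<in>betaX. ueq u v} umin" unfolding right_zero_band_def using k by blast
  show "left_zero_band {v\<in>betaX. ueq u v} umax" unfolding left_zero_band_def using k by blast
qed


theorem corollary6:
  shows
  "(\<forall>u\<in>(betaX :: 'a::linorder set set set). \<forall>v\<in>betaX.
      (tri u v \<longleftrightarrow> (umin u v = u \<or> umin v u = u))
    \<and> (tri u v \<longleftrightarrow> (umin u v = u \<or> umin u v \<noteq> umin v u))
    \<and> (tri u v \<longleftrightarrow> (umax u v = v \<or> umax v u = v))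
    \<and> (tri u v \<longleftrightarrow> (umax u v = v \<or> umax u v \<noteq> umax v u))
    \<and> (ueq u v \<longleftrightarrow> (umin u v \<noteq> umin v u \<or> u = v))
    \<and> (ueq u v \<longleftrightarrow> (umax u v \<noteq> umax v u \<or> u = v)))
   \<and> is_congruence (betaX :: 'a set set set) umax umin ueq
   \<and> (\<forall>u\<in>(betaX :: 'a set set set). \<forall>v\<in>betaX. ueq u v \<longleftrightarrow> relD u v)
   \<and> (\<forall>u\<in>(betaX :: 'a set set set). \<forall>v\<in>betaX. ueq u v \<longleftrightarrow> supp u = supp v)
   \<and> (\<forall>u\<in>(betaX :: 'a set set set). \<forall>v\<in>betaX.
        supp (umin u v) = smin (supp u) (supp v)
      \<and> supp (umax u v) = smax (supp u) (supp v))
   \<and> (\<forall>u\<in>(betaX :: 'a set set set).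
        (is_principal u \<longrightarrow> {v\<in>betaX. ueq u v} = {u})
      \<and> (\<not> is_principal u \<and> I_u u \<in> u \<longrightarrow>
           left_zero_band {v\<in>betaX. ueq u v} umin \<and> right_zero_band {v\<in>betaX. ueq u v} umax)
      \<and> (\<not> is_principal u \<and> J_u u \<in> u \<longrightarrow>
           right_zero_band {v\<in>betaX. ueq u v} umin \<and> left_zero_band {v\<in>betaX. ueq u v} umax))"
proof (intro conjI ballI)
  fix u v :: "'a set set" assume "u \<in> betaX" "v \<in> betaX"
  then have u: "is_uf u" and v: "is_uf v" by (auto simp: bX)
  note p = part1[OF u v]
  show "tri u v = (umin u v = u \<or> umin v u = u)" using p by blast
  show "tri u v = (umin u v = u \<or> umin u v \<noteq> umin v u)" using p by blast
  show "tri u v = (umax u v = v \<or> umax v u = v)" using p by blast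
  show "tri u v = (umax u v = v \<or> umax u v \<noteq> umax v u)" using p by blast
  show "ueq u v = (umin u v \<noteq> umin v u \<or> u = v)" using p by blast
  show "ueq u v = (umax u v \<noteq> umax v u \<or> u = v)" using p by blast
next
  show "is_congruence (betaX :: 'a set set set) umax umin ueq" by (rule cong)
next
  fix u v :: "'a set set" assume "u \<in> betaX" "v \<in> betaX"
  then have u: "is_uf u" and v: "is_uf v" by (auto simp: bX)
  show "ueq u v = relD u v" using relD_iff[OF u v] .
  show "ueq u v = (supp u = supp v)" using ueq_supp[OF u v] .
  show "supp (umin u v) = smin (supp u) (supp v)" using supp_ops[OF u v] by blast
  show "supp (umax u v) = smax (supp u) (supp v)" using supp_ops[OF u v] by blast
next
  fix u :: "'a set set" assume "u \<in> betaX"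
  then have u: "is_uf u" by (auto simp: bX)
  note b = bands[OF u]
  show "is_principal u \<longrightarrow> {v \<in> betaX. ueq u v} = {u}" using b by blast
  show "\<not> is_principal u \<and> I_u u \<in> u \<longrightarrow>
           left_zero_band {v\<in>betaX. ueq u v} umin \<and> right_zero_band {v\<in>betaX. ueq u v} umax" using b by blast
  show "\<not> is_principal u \<and> J_u u \<in> u \<longrightarrow>
           right_zero_band {v\<in>betaX. ueq u v} umin \<and> left_zero_band {v\<in>betaX. ueq u v} umax" using b by blast
qed

end
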